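(* Let a group $G$ act equicontinuously on a uniform space $(X,S)$, and let $T$ be an $S$-compatible topology on $X$. Let $(x_\alpha)$ be a net in $X$ converging to $x$ in the topology $T_S$, and let $(g_\alpha)$ be a net in $G$ indexed by the same directed set. Then for every $y\in X$: the net $(g_\alpha x_\alpha)$ converges to $y$ in $T$ if and only if the net $(g_\alpha x)$ converges to $y$ in $T$.
   Context: A uniform structure $S$ on a set $X$ is a filter of subsets of $X\times X$, each containing the diagonal, closed under inversion, such that for every $U\in S$ there is $U'\in S$ with $U'U'\subset U$ ($U_1U_2=\{(u_1,u_2):\exists u_3,(u_1,u_3)\in U_1,(u_3,u_2)\in U_2\}$). For $V\subset X$, $UV=\{v:\exists v'\in V,(v,v')\in U\}$. $T_S$ is the topology generated by the sets $U\{x\}$, $U\in S$, $x\in X$. A topology $T$ is $S$-compatible if for every $V\in T$ and $y\in V$ there exist $V'\in T$ with $y\in V'$ and $U\in S$ with $UV'\subset V$. The action is equicontinuous if for every $U\in S$, $\{(u,v):(gu,gv)\in U\ \forall g\in G\}\in S$. *)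

theory Defs
  imports "HOL-Analysis.Analysis" "HOL-Algebra.Group_Action"
begin

text \<open>Composition U1 U2 = {(u1,u2). \<exists>u3. (u1,u3)\<in>U1 \<and> (u3,u2)\<in>U2} is relcomp (O).\<close>
definition uniform_structure :: "'a set \<Rightarrow> ('a \<times> 'a) set set \<Rightarrow> bool" where
  "uniform_structure X S \<longleftrightarrow>
     S \<subseteq> Pow (X \<times> X) \<and>
     X \<times> X \<in> S \<and>
     (\<forall>U\<in>S. \<forall>W. U \<subseteq> W \<and> W \<subseteq> X \<times> X \<longrightarrow> W \<in> S) \<and>
     (\<forall>U\<in>S. \<forall>W\<in>S. U \<inter> W \<in> S) \<and>
     (\<forall>U\<in>S. Id_on X \<subseteq> U) \<and>
     (\<forall>U\<in>S. converse U \<in> S) \<and>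
     (\<forall>U\<in>S. \<exists>U'\<in>S. U' O U' \<subseteq> U)"

definition uapp :: "('a \<times> 'a) set \<Rightarrow> 'a set \<Rightarrow> 'a set" where
  "uapp U V = {v. \<exists>v'\<in>V. (v, v') \<in> U}"

definition uniform_topology :: "'a set \<Rightarrow> ('a \<times> 'a) set set \<Rightarrow> 'a topology" where
  "uniform_topology X S = topology_generated_by {uapp U {x} | U x. U \<in> S \<and> x \<in> X}"

definition S_compatible :: "'a set \<Rightarrow> ('a \<times> 'a) set set \<Rightarrow> 'a topology \<Rightarrow> bool" where
  "S_compatible X S T \<longleftrightarrow> topspace T = X \<and>
     (\<forall>V y. openin T V \<and> y \<in> V \<longrightarrow>
        (\<exists>V' U. openin T V' \<and> y \<in> V' \<and> U \<in> S \<and> uapp U V' \<subseteq> V))"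

definition equicontinuous_action ::
  "('g, 'b) monoid_scheme \<Rightarrow> ('g \<Rightarrow> 'a \<Rightarrow> 'a) \<Rightarrow> 'a set \<Rightarrow> ('a \<times> 'a) set set \<Rightarrow> bool" where
  "equicontinuous_action G \<phi> X S \<longleftrightarrow>
     (\<forall>U\<in>S. {(u, v) \<in> X \<times> X. \<forall>g\<in>carrier G. (\<phi> g u, \<phi> g v) \<in> U} \<in> S)"

definition directed_set :: "'i set \<Rightarrow> ('i \<Rightarrow> 'i \<Rightarrow> bool) \<Rightarrow> bool" where
  "directed_set D leq \<longleftrightarrow> D \<noteq> {} \<and>
     (\<forall>a\<in>D. leq a a) \<and>
     (\<forall>a\<in>D. \<forall>b\<in>D. \<forall>c\<in>D. leq a b \<and> leq b c \<longrightarrow> leq a c) \<and>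
     (\<forall>a\<in>D. \<forall>b\<in>D. \<exists>c\<in>D. leq a c \<and> leq b c)"

definition net_converges :: "'a topology \<Rightarrow> 'i set \<Rightarrow> ('i \<Rightarrow> 'i \<Rightarrow> bool) \<Rightarrow> ('i \<Rightarrow> 'a) \<Rightarrow> 'a \<Rightarrow> bool" where
  "net_converges T D leq x y \<longleftrightarrow> y \<in> topspace T \<and>
     (\<forall>V. openin T V \<and> y \<in> V \<longrightarrow> (\<exists>a\<in>D. \<forall>b\<in>D. leq a b \<longrightarrow> x b \<in> V))"

end

theory Submission
  imports Defs
begin

lemma us_SX: "uniform_structure X S \<Longrightarrow> S \<subseteq> Pow (X \<times> X)"
  unfolding uniform_structure_def by (elim conjE)
lemma us_diag: "uniform_structure X S \<Longrightarrow> U\<in>S \<Longrightarrow> Id_on X \<subseteq> U"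
  unfolding uniform_structure_def by (elim conjE, drule bspec)
lemma us_conv: "uniform_structure X S \<Longrightarrow> U\<in>S \<Longrightarrow> converse U \<in> S"
  unfolding uniform_structure_def by (elim conjE, drule bspec)

lemma ev_close:
  assumes us: "uniform_structure X S"
    and nc: "net_converges (uniform_topology X S) D leq xs x"
    and U: "U \<in> S"
  shows "\<exists>a\<in>D. \<forall>b\<in>D. leq a b \<longrightarrow> (xs b, x) \<in> U"
proof -
  note SX = us_SX[OF us] and diag = us_diag[OF us]
  have "x \<in> topspace (uniform_topology X S)" using nc unfolding net_converges_def by simp
  hence "x \<in> \<Union>{uapp U {x} | U x. U \<in> S \<and> x \<in> X}"
    unfolding uniform_topology_def topology_generated_by_topspace .
  then obtain U0 z where "U0 \<in> S" "x \<in> uapp U0 {z}" by blast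
  hence xX: "x \<in> X" unfolding uapp_def using SX by blast
  have op: "openin (uniform_topology X S) (uapp U {x})"
    unfolding uniform_topology_def
    by (rule topology_generated_by_Basis) (use U xX in blast)
  have "(x,x) \<in> U" using diag[OF U] xX by (auto simp: Id_on_def)
  hence "x \<in> uapp U {x}" unfolding uapp_def by simp
  with op nc obtain a where "a \<in> D" "\<forall>b\<in>D. leq a b \<longrightarrow> xs b \<in> uapp U {x}"
    unfolding net_converges_def by blast
  thus ?thesis unfolding uapp_def by auto
qed

lemma dir_trans: "directed_set D leq \<Longrightarrow> a\<in>D \<Longrightarrow> b\<in>D \<Longrightarrow> c\<in>D \<Longrightarrow> leq a b \<Longrightarrow> leq b c \<Longrightarrow> leq a c"
  unfolding directed_set_def by (elim conjE, drule bspec, assumption, drule bspec, assumption, drule bspec, assumption, blast)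
lemma dir_ub: "directed_set D leq \<Longrightarrow> a\<in>D \<Longrightarrow> b\<in>D \<Longrightarrow> \<exists>c\<in>D. leq a c \<and> leq b c"
  unfolding directed_set_def by (elim conjE, drule bspec, assumption, drule bspec, assumption, assumption)

lemma transfer_dir:
  assumes dir: "directed_set D leq"
    and conv: "net_converges T D leq f y"
    and comp: "S_compatible X S T"
    and eq: "equicontinuous_action G \<phi> X S"
    and close: "\<And>W. W \<in> S \<Longrightarrow> \<exists>a\<in>D. \<forall>b\<in>D. leq a b \<longrightarrow> (p b, q b) \<in> W"
    and f: "\<And>b. b \<in> D \<Longrightarrow> f b = \<phi> (gs b) (q b)"
    and gs: "\<forall>a\<in>D. gs a \<in> carrier G"
  shows "net_converges T D leq (\<lambda>b. \<phi> (gs b) (p b)) y"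
proof -
  have yT: "y \<in> topspace T" using conv unfolding net_converges_def by simp
  have conv2: "\<And>V. openin T V \<Longrightarrow> y \<in> V \<Longrightarrow> \<exists>a\<in>D. \<forall>b\<in>D. leq a b \<longrightarrow> f b \<in> V"
    using conv unfolding net_converges_def by blast
  have comp2: "\<And>V. openin T V \<Longrightarrow> y \<in> V \<Longrightarrow> \<exists>V' U. openin T V' \<and> y \<in> V' \<and> U \<in> S \<and> uapp U V' \<subseteq> V"
    using comp unfolding S_compatible_def by blast
  have eq2: "\<And>U. U \<in> S \<Longrightarrow> {(u, v) \<in> X \<times> X. \<forall>g\<in>carrier G. (\<phi> g u, \<phi> g v) \<in> U} \<in> S"
    using eq unfolding equicontinuous_action_def by blast
  have main: "\<exists>a\<in>D. \<forall>b\<in>D. leq a b \<longrightarrow> \<phi> (gs b) (p b) \<in> V" if V: "openin T V" "y \<in> V" for V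
  proof -
    obtain V' U where V': "openin T V'" "y \<in> V'" "U \<in> S" "uapp U V' \<subseteq> V"
      using comp2[OF V] by blast
    define W where "W = {(u, v) \<in> X \<times> X. \<forall>g\<in>carrier G. (\<phi> g u, \<phi> g v) \<in> U}"
    have "W \<in> S" unfolding W_def by (rule eq2[OF V'(3)])
    from close[OF this] obtain a1 where a1: "a1 \<in> D" "\<forall>b\<in>D. leq a1 b \<longrightarrow> (p b, q b) \<in> W" by blast
    from conv2[OF V'(1,2)] obtain a2 where a2: "a2 \<in> D" "\<forall>b\<in>D. leq a2 b \<longrightarrow> f b \<in> V'" by blast
    from dir_ub[OF dir a1(1) a2(1)] obtain c where c: "c \<in> D" "leq a1 c" "leq a2 c" by blast
    have "\<forall>b\<in>D. leq c b \<longrightarrow> \<phi> (gs b) (p b) \<in> V"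
    proof (intro ballI impI)
      fix b assume b: "b \<in> D" "leq c b"
      have t1: "leq a1 b" by (rule dir_trans[OF dir a1(1) c(1) b(1) c(2) b(2)])
      have t2: "leq a2 b" by (rule dir_trans[OF dir a2(1) c(1) b(1) c(3) b(2)])
      have "(p b, q b) \<in> W" using a1(2) b(1) t1 by blast
      moreover have "gs b \<in> carrier G" using gs b(1) by blast
      ultimately have "(\<phi> (gs b) (p b), \<phi> (gs b) (q b)) \<in> U" unfolding W_def by blast
      moreover have "\<phi> (gs b) (q b) \<in> V'"
      proof -
        have "f b \<in> V'" using a2(2) b(1) t2 by blast
        thus ?thesis by (simp only: f[OF b(1)])
      qed
      ultimately have "\<phi> (gs b) (p b) \<in> uapp U V'" unfolding uapp_def by blast
      thus "\<phi> (gs b) (p b) \<in> V" using V'(4) by blast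
    qed
    thus ?thesis using c(1) by blast
  qed
  show ?thesis unfolding net_converges_def using yT main by blast
qed

theorem lemma2p7:
  fixes G :: "('g, 'b) monoid_scheme" and \<phi> :: "'g \<Rightarrow> 'a \<Rightarrow> 'a"
    and X :: "'a set" and S :: "('a \<times> 'a) set set" and T :: "'a topology"
    and D :: "'i set" and leq :: "'i \<Rightarrow> 'i \<Rightarrow> bool"
    and xs :: "'i \<Rightarrow> 'a" and gs :: "'i \<Rightarrow> 'g" and x y :: 'a
  assumes "group G"
    and "group_action G X \<phi>"
    and "uniform_structure X S"
    and "equicontinuous_action G \<phi> X S"
    and "S_compatible X S T"
    and "directed_set D leq"
    and "\<forall>a\<in>D. xs a \<in> X"
    and "net_converges (uniform_topology X S) D leq xs x"
    and "\<forall>a\<in>D. gs a \<in> carrier G"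
    and "y \<in> X"
  shows "net_converges T D leq (\<lambda>a. \<phi> (gs a) (xs a)) y \<longleftrightarrow>
         net_converges T D leq (\<lambda>a. \<phi> (gs a) x) y"
proof -
  have c1: "\<exists>a\<in>D. \<forall>b\<in>D. leq a b \<longrightarrow> (xs b, x) \<in> W" if "W \<in> S" for W
    using ev_close[OF assms(3) assms(8) that] .
  have c2: "\<exists>a\<in>D. \<forall>b\<in>D. leq a b \<longrightarrow> (x, xs b) \<in> W" if "W \<in> S" for W
  proof -
    from ev_close[OF assms(3) assms(8) us_conv[OF assms(3) that]]
    show ?thesis by simp
  qed
  show ?thesis
  proof
    assume h: "net_converges T D leq (\<lambda>a. \<phi> (gs a) (xs a)) y"
    show "net_converges T D leq (\<lambda>a. \<phi> (gs a) x) y"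
      by (rule transfer_dir[OF assms(6) h assms(5) assms(4) c2 _ assms(9)]) simp_all
  next
    assume h: "net_converges T D leq (\<lambda>a. \<phi> (gs a) x) y"
    show "net_converges T D leq (\<lambda>a. \<phi> (gs a) (xs a)) y"
      by (rule transfer_dir[OF assms(6) h assms(5) assms(4) c1 _ assms(9)]) simp_all
  qed
qed

end
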